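(* Let $(N,\langle\cdot,\cdot\rangle,\varphi)$ be a modified $H$-type group (see context) with $N$ connected and simply connected. Let $I\subset\mathbb R$ be an interval containing $0$ and $\gamma:I\to N$, $\gamma(t)=\exp(z(t)+x(t))$ with $z(t)\in\mathfrak z$, $x(t)\in\mathfrak v$, a geodesic with $\gamma(0)=1$ and $\dot\gamma(0)=z_0+x_0$, where $z_0\in\mathfrak z$ and $x_0\in\mathfrak v$ are both nonzero. If $\langle x_0,x_0\rangle=0$ or $z_0\in\ker(\mathrm{Rc}|_{\mathfrak z})$, then $z(t)=tz_0$ for all $t\in I$.
   Context: Let $N$ be a 2-step nilpotent real Lie group with Lie algebra $\mathfrak n$, Lie bracket $[\cdot,\cdot]$ and center $\mathfrak z$, endowed with a left-invariant pseudo-Riemannian metric $\langle\cdot,\cdot\rangle$ for which $\mathfrak z$ is nondegenerate. Put $\mathfrak v=\mathfrak z^\perp$. For $z\in\mathfrak z$ define $j(z)\in\mathrm{End}(\mathfrak v)$ by $\langle [x,y],z\rangle=\langle y,j(z)x\rangle$ for all $x,y\in\mathfrak v$. Given a quadratic form $\varphi$ on $\mathfrak z$, $(N,\langle\cdot,\cdot\rangle,\varphi)$ is a modified $H$-type group if $j(z)^2=-\varphi(z)\,\mathrm{Id}_{\mathfrak v}$ for all $z\in\mathfrak z$. The Ricci operator $\mathrm{Rc}$ is defined by $\langle\mathrm{Rc}\,u,w\rangle=\mathrm{Ric}(u,w)$; it maps $\mathfrak z$ into $\mathfrak z$. $\exp$ is the Lie group exponential map (a diffeomorphism here). *)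

theory Defs
  imports "HOL-Analysis.Analysis"
begin

text \<open>
Model: a connected, simply connected 2-step nilpotent Lie group N is identified, via the
(diffeomorphic) exponential map, with its Lie algebra n (a finite-dimensional real vector
space, here a euclidean_space type).  In these exponential coordinates the group law is
p * q = p + q + 1/2 [p,q] (BCH for 2-step nilpotent algebras) and the identity is 0.
\<close>

type_synonym 'n form = "'n \<Rightarrow> 'n \<Rightarrow> real"
type_synonym 'n brk = "'n \<Rightarrow> 'n \<Rightarrow> 'n"

definition center :: "'n::real_vector brk \<Rightarrow> 'n set" where
  "center br = {z. \<forall>y. br z y = 0}"

definition perp_center :: "'n::real_vector form \<Rightarrow> 'n brk \<Rightarrow> 'n set" where
  "perp_center g br = {v. \<forall>z\<in>center br. g v z = 0}"

definition two_step_nilpotent :: "'n::real_vector brk \<Rightarrow> bool" where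
  "two_step_nilpotent br \<longleftrightarrow> bilinear br \<and> (\<forall>a b. br a b = - br b a)
     \<and> (\<forall>a b c. br (br a b) c = 0) \<and> (\<exists>a b. br a b \<noteq> 0)"

definition pr_metric :: "'n::real_vector form \<Rightarrow> bool" where
  "pr_metric g \<longleftrightarrow> bilinear g \<and> (\<forall>u v. g u v = g v u) \<and> (\<forall>u. (\<forall>v. g u v = 0) \<longrightarrow> u = 0)"

text \<open>Left-invariant metric at the point p (in exponential coordinates), with value g at 0:
  G_p(u,v) = g(dL_p^{-1} u, dL_p^{-1} v), where dL_p^{-1} u = u - 1/2 [p,u].\<close>
definition lmetric :: "'n::real_vector form \<Rightarrow> 'n brk \<Rightarrow> 'n \<Rightarrow> 'n \<Rightarrow> 'n \<Rightarrow> real" where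
  "lmetric g br p u v = g (u - (1/2) *\<^sub>R br p u) (v - (1/2) *\<^sub>R br p v)"

text \<open>Geodesic on the interval I: Euler--Lagrange equations of the energy
  L(p,v) = 1/2 G_p(v,v) in the global chart, i.e. for every constant direction w,
  d/dt G_{gamma}(gamma',w) = 1/2 (d_w G)_{gamma}(gamma',gamma').\<close>
definition is_geodesic :: "'n::real_normed_vector form \<Rightarrow> 'n brk \<Rightarrow> real set \<Rightarrow> (real \<Rightarrow> 'n) \<Rightarrow> bool" where
  "is_geodesic g br I \<gamma> \<longleftrightarrow> (\<exists>v. (\<forall>t\<in>I. (\<gamma> has_vector_derivative v t) (at t within I)) \<and>
     (\<forall>t\<in>I. \<forall>w. \<exists>D.
        ((\<lambda>h. lmetric g br (\<gamma> t + h *\<^sub>R w) (v t) (v t)) has_real_derivative D) (at 0) \<and>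
        ((\<lambda>s. lmetric g br (\<gamma> s) (v s) w) has_real_derivative D / 2) (at t within I)))"

text \<open>Levi-Civita connection on left-invariant fields (Koszul formula).\<close>
definition lc :: "'n::real_vector form \<Rightarrow> 'n brk \<Rightarrow> 'n \<Rightarrow> 'n \<Rightarrow> 'n" where
  "lc g br X Y = (THE u. \<forall>W. g u W = (g (br X Y) W - g (br Y W) X + g (br W X) Y) / 2)"

definition curv :: "'n::real_vector form \<Rightarrow> 'n brk \<Rightarrow> 'n \<Rightarrow> 'n \<Rightarrow> 'n \<Rightarrow> 'n" where
  "curv g br X Y Z = lc g br X (lc g br Y Z) - lc g br Y (lc g br X Z) - lc g br (br X Y) Z"

definition ricci :: "'n::euclidean_space form \<Rightarrow> 'n brk \<Rightarrow> 'n \<Rightarrow> 'n \<Rightarrow> real" where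
  "ricci g br Y Z = (\<Sum>b\<in>Basis. curv g br b Y Z \<bullet> b)"

definition ricci_op :: "'n::euclidean_space form \<Rightarrow> 'n brk \<Rightarrow> 'n \<Rightarrow> 'n" where
  "ricci_op g br u = (THE v. \<forall>w. g v w = ricci g br u w)"

definition modified_H_type :: "'n::real_vector form \<Rightarrow> 'n brk \<Rightarrow> ('n \<Rightarrow> real) \<Rightarrow> bool" where
  "modified_H_type g br \<phi> \<longleftrightarrow>
     two_step_nilpotent br \<and> pr_metric g \<and>
     (\<forall>u\<in>center br. (\<forall>v\<in>center br. g u v = 0) \<longrightarrow> u = 0) \<and>
     (\<exists>B. bilinear B \<and> (\<forall>u v. B u v = B v u) \<and> (\<forall>z\<in>center br. \<phi> z = B z z)) \<and>
     (\<exists>j. (\<forall>z\<in>center br. \<forall>x\<in>perp_center g br. j z x \<in> perp_center g br) \<and>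
          (\<forall>z\<in>center br. \<forall>x\<in>perp_center g br. \<forall>y\<in>perp_center g br.
               g (br x y) z = g y (j z x)) \<and>
          (\<forall>z\<in>center br. \<forall>x\<in>perp_center g br. j z (j z x) = - (\<phi> z) *\<^sub>R x))"

end

theory Submission
  imports Defs
begin


lemma const_on:
  fixes f :: "real \<Rightarrow> real"
  assumes "convex I" "a \<in> I" "t \<in> I" "\<And>s. s \<in> I \<Longrightarrow> (f has_real_derivative 0) (at s within I)"
  shows "f t = f a"
  using has_field_derivative_zero_constant[of I f] assms by metis

lemma ode2:
  fixes P Q :: "real \<Rightarrow> real"
  assumes I: "convex I" "0 \<in> I"
    and dP: "\<And>t. t \<in> I \<Longrightarrow> (P has_real_derivative Q t) (at t within I)"
    and dQ: "\<And>t. t \<in> I \<Longrightarrow> (Q has_real_derivative (- c * P t)) (at t within I)"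
    and P0: "P 0 = 0" and Q0: "Q 0 = 0"
    and t: "t \<in> I"
  shows "P t = 0"
proof -
  have E: "Q s ^ 2 + c * P s ^ 2 = 0" if s: "s \<in> I" for s
  proof -
    have "(\<lambda>s. Q s ^ 2 + c * P s ^ 2) s = (\<lambda>s. Q s ^ 2 + c * P s ^ 2) 0"
    proof (rule const_on[OF I(1) I(2) s])
      fix r assume r: "r \<in> I"
      show "((\<lambda>s. Q s ^ 2 + c * P s ^ 2) has_real_derivative 0) (at r within I)"
        by (rule derivative_eq_intros dP[OF r] dQ[OF r] refl | simp)+
    qed
    then show ?thesis using P0 Q0 by simp
  qed
  consider "c > 0" | "c = 0" | "c < 0" by linarith
  then show ?thesis
  proof cases
    case 1
    have "Q t ^ 2 \<ge> 0" "c * P t ^ 2 \<ge> 0" using 1 by auto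
    then have "c * P t ^ 2 = 0" using E[OF t] by linarith
    then show ?thesis using 1 by simp
  next
    case 2
    have "Q s = 0" if s: "s \<in> I" for s
      using const_on[OF I(1) I(2) s, of Q] dQ 2 Q0 by simp
    then have "P t = P 0"
      using const_on[OF I(1) I(2) t, of P] dP by (metis has_field_derivative_transform_within)
    then show ?thesis using P0 by simp
  next
    case 3
    define k where "k = sqrt (- c)"
    have k: "k > 0" "k * k = - c" using 3 unfolding k_def by (auto simp: real_sqrt_mult[symmetric])
    have c: "c = - (k * k)" using k by simp
    have F1: "exp (k * t) * (Q t - k * P t) = exp (k * 0) * (Q 0 - k * P 0)"
    proof (rule const_on[OF I(1) I(2) t, of "\<lambda>s. exp (k * s) * (Q s - k * P s)"])
      fix r assume r: "r \<in> I"
      show "((\<lambda>s. exp (k * s) * (Q s - k * P s)) has_real_derivative 0) (at r within I)"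
        by (rule derivative_eq_intros dP[OF r] dQ[OF r] refl | simp)+
          (simp add: algebra_simps c)
    qed
    have F2: "exp (- k * t) * (Q t + k * P t) = exp (- k * 0) * (Q 0 + k * P 0)"
    proof (rule const_on[OF I(1) I(2) t, of "\<lambda>s. exp (- k * s) * (Q s + k * P s)"])
      fix r assume r: "r \<in> I"
      show "((\<lambda>s. exp (- k * s) * (Q s + k * P s)) has_real_derivative 0) (at r within I)"
        by (rule derivative_eq_intros dP[OF r] dQ[OF r] refl | simp)+
          (simp add: algebra_simps c)
    qed
    have "Q t - k * P t = 0" using F1 P0 Q0 by simp
    moreover have "Q t + k * P t = 0" using F2 P0 Q0 by simp
    ultimately have "k * P t = 0" by linarith
    then show ?thesis using k by simp
  qed
qed



locale mh =
  fixes g :: "'n::euclidean_space \<Rightarrow> 'n \<Rightarrow> real" and br :: "'n \<Rightarrow> 'n \<Rightarrow> 'n"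
    and \<phi> :: "'n \<Rightarrow> real" and B :: "'n \<Rightarrow> 'n \<Rightarrow> real" and j :: "'n \<Rightarrow> 'n \<Rightarrow> 'n"
  assumes bil_br: "bilinear br" and skew: "\<And>a b. br a b = - br b a"
    and nil: "\<And>a b c. br (br a b) c = 0" and nz: "\<exists>a b. br a b \<noteq> 0"
    and bil_g: "bilinear g" and sym: "\<And>u v. g u v = g v u"
    and nd: "\<And>u. (\<forall>v. g u v = 0) \<Longrightarrow> u = 0"
    and ndz: "\<And>u. u \<in> center br \<Longrightarrow> (\<forall>v\<in>center br. g u v = 0) \<Longrightarrow> u = 0"
    and bilB: "bilinear B" and symB: "\<And>u v. B u v = B v u"
    and phiB: "\<And>z. z \<in> center br \<Longrightarrow> \<phi> z = B z z"
    and j1: "\<And>z x. z \<in> center br \<Longrightarrow> x \<in> perp_center g br \<Longrightarrow> j z x \<in> perp_center g br"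
    and j2: "\<And>z x y. z \<in> center br \<Longrightarrow> x \<in> perp_center g br \<Longrightarrow> y \<in> perp_center g br \<Longrightarrow>
               g (br x y) z = g y (j z x)"
    and j3: "\<And>z x. z \<in> center br \<Longrightarrow> x \<in> perp_center g br \<Longrightarrow> j z (j z x) = - (\<phi> z) *\<^sub>R x"
begin

abbreviation "C \<equiv> center br"
abbreviation "V \<equiv> perp_center g br"

lemma lin_gl: "linear (\<lambda>a. g a c)" using bil_g unfolding bilinear_def by blast
lemma lin_gr: "linear (\<lambda>a. g c a)" using bil_g unfolding bilinear_def by blast
lemma lin_bl: "linear (\<lambda>a. br a c)" using bil_br unfolding bilinear_def by blast
lemma lin_br: "linear (\<lambda>a. br c a)" using bil_br unfolding bilinear_def by blast
lemma lin_Bl: "linear (\<lambda>a. B a c)" using bilB unfolding bilinear_def by blast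
lemma lin_Br: "linear (\<lambda>a. B c a)" using bilB unfolding bilinear_def by blast

lemma g_simps[simp]:
  "g (a + b) c = g a c + g b c" "g a (b + c) = g a b + g a c"
  "g (a - b) c = g a c - g b c" "g a (b - c) = g a b - g a c"
  "g (r *\<^sub>R a) c = r * g a c" "g a (r *\<^sub>R c) = r * g a c"
  "g (- a) c = - g a c" "g a (- c) = - g a c"
  "g 0 c = 0" "g a 0 = 0"
  using linear_add[OF lin_gl] linear_add[OF lin_gr] linear_diff[OF lin_gl] linear_diff[OF lin_gr]
    linear_scale[OF lin_gl] linear_scale[OF lin_gr] linear_neg[OF lin_gl] linear_neg[OF lin_gr]
    linear_0[OF lin_gl] linear_0[OF lin_gr] by auto

lemma br_simps[simp]:
  "br (a + b) c = br a c + br b c" "br a (b + c) = br a b + br a c"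
  "br (a - b) c = br a c - br b c" "br a (b - c) = br a b - br a c"
  "br (r *\<^sub>R a) c = r *\<^sub>R br a c" "br a (r *\<^sub>R c) = r *\<^sub>R br a c"
  "br (- a) c = - br a c" "br a (- c) = - br a c"
  "br 0 c = 0" "br a 0 = 0"
  using linear_add[OF lin_bl] linear_add[OF lin_br] linear_diff[OF lin_bl] linear_diff[OF lin_br]
    linear_scale[OF lin_bl] linear_scale[OF lin_br] linear_neg[OF lin_bl] linear_neg[OF lin_br]
    linear_0[OF lin_bl] linear_0[OF lin_br] by auto

lemma B_simps[simp]:
  "B (a + b) c = B a c + B b c" "B a (b + c) = B a b + B a c"
  using linear_add[OF lin_Bl] linear_add[OF lin_Br] by auto

lemma br_C: "br a b \<in> C" using nil unfolding center_def by auto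
lemma brCl: "a \<in> C \<Longrightarrow> br a b = 0" unfolding center_def by auto
lemma brCr: "b \<in> C \<Longrightarrow> br a b = 0" using skew brCl by (metis neg_equal_0_iff_equal)

lemma subspace_C: "subspace C"
  unfolding subspace_def center_def by auto
lemma subspace_V: "subspace V"
  unfolding subspace_def perp_center_def by auto

lemma CV: "a \<in> C \<Longrightarrow> b \<in> V \<Longrightarrow> g b a = 0" unfolding perp_center_def by auto
lemma CV': "a \<in> C \<Longrightarrow> b \<in> V \<Longrightarrow> g a b = 0" using CV[of a b] sym[of a b] by simp
lemma CintV: "a \<in> C \<Longrightarrow> a \<in> V \<Longrightarrow> a = 0" by (rule ndz) (auto intro: CV)

definition M :: "'n \<Rightarrow> 'n" where "M u = (\<Sum>b\<in>Basis. g u b *\<^sub>R b)"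

lemma g_expand: "g u w = (\<Sum>b\<in>Basis. (w \<bullet> b) * g u b)"
proof -
  have "g u w = g u (\<Sum>b\<in>Basis. (w \<bullet> b) *\<^sub>R b)" by (simp add: euclidean_representation)
  also have "\<dots> = (\<Sum>b\<in>Basis. g u ((w \<bullet> b) *\<^sub>R b))"
    by (rule linear_sum[OF lin_gr])
  also have "\<dots> = (\<Sum>b\<in>Basis. (w \<bullet> b) * g u b)" by simp
  finally show ?thesis .
qed

lemma M_inner: "M u \<bullet> w = g u w"
  unfolding M_def g_expand[of u w] inner_sum_left by (rule sum.cong) (auto simp: inner_commute)

lemma M_linear: "linear M"
proof (rule linearI)
  show "M (x + y) = M x + M y" for x y
    by (subst vector_eq_rdot[symmetric]) (simp add: M_inner inner_add_left)
  show "M (r *\<^sub>R x) = r *\<^sub>R M x" for r x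
    by (subst vector_eq_rdot[symmetric]) (simp add: M_inner)
qed

lemma M_inj: "inj M"
proof (rule injI)
  fix x y assume "M x = M y"
  then have "\<forall>w. g (x - y) w = 0" by (metis M_inner g_simps(3) right_minus_eq)
  then show "x = y" using nd by fastforce
qed

lemma M_surj: "surj M"
  using linear_injective_imp_surjective[OF M_linear M_inj] by simp

lemma represent: assumes "linear f" shows "\<exists>u. \<forall>w. g u w = f w"
proof -
  obtain u where u: "M u = (\<Sum>b\<in>Basis. f b *\<^sub>R b)" using M_surj by (metis surjD)
  have "g u w = f w" for w
  proof -
    have "g u w = (\<Sum>b\<in>Basis. f b *\<^sub>R b) \<bullet> w" by (simp add: M_inner flip: u)
    also have "\<dots> = (\<Sum>b\<in>Basis. (w \<bullet> b) * f b)"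
      unfolding inner_sum_left by (rule sum.cong) (auto simp: inner_commute)
    also have "\<dots> = (\<Sum>b\<in>Basis. f ((w \<bullet> b) *\<^sub>R b))" by (simp add: linear_scale[OF assms])
    also have "\<dots> = f (\<Sum>b\<in>Basis. (w \<bullet> b) *\<^sub>R b)" by (rule linear_sum[OF assms, symmetric])
    also have "\<dots> = f w" by (simp add: euclidean_representation)
    finally show ?thesis .
  qed
  then show ?thesis by blast
qed


lemma decomp: "\<exists>a\<in>C. \<exists>b\<in>V. u = a + b"
proof -
  let ?Zp = "{y. \<forall>x\<in>C. orthogonal x y}"
  have d1: "dim ?Zp + dim C = DIM('n)"
    using dim_subspace_orthogonal_to_vectors[OF subspace_C subspace_UNIV] by (simp add: dim_UNIV)
  have MV: "M ` V = ?Zp"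
  proof
    show "M ` V \<subseteq> ?Zp"
      by (auto simp: orthogonal_def inner_commute[of _ "M _"] M_inner perp_center_def)
    show "?Zp \<subseteq> M ` V"
    proof
      fix y assume y: "y \<in> ?Zp"
      obtain u where u: "y = M u" using M_surj by (metis surjD)
      have "u \<in> V" using y unfolding u perp_center_def
        by (auto simp: orthogonal_def inner_commute[of _ "M _"] M_inner)
      then show "y \<in> M ` V" using u by blast
    qed
  qed
  have "dim (M ` V) = dim V"
    by (rule dim_image_eq[OF M_linear]) (use M_inj in \<open>auto simp: inj_on_def inj_def\<close>)
  with MV d1 have d2: "dim V + dim C = DIM('n)" by simp
  have CV0: "C \<inter> V = {0}"
  proof
    show "C \<inter> V \<subseteq> {0}" using CintV by auto
    show "{0} \<subseteq> C \<inter> V" using subspace_0[OF subspace_C] subspace_0[OF subspace_V] by simp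
  qed
  have "dim {x + y |x y. x \<in> C \<and> y \<in> V} + dim (C \<inter> V) = dim C + dim V"
    by (rule dim_sums_Int[OF subspace_C subspace_V])
  with CV0 d2 have "dim {x + y |x y. x \<in> C \<and> y \<in> V} = DIM('n)" by simp
  then have "span {x + y |x y. x \<in> C \<and> y \<in> V} = UNIV" by (simp only: dim_eq_full)
  moreover have "span {x + y |x y. x \<in> C \<and> y \<in> V} = {x + y |x y. x \<in> C \<and> y \<in> V}"
    by (rule span_eq_iff[THEN iffD2, OF subspace_sums[OF subspace_C subspace_V]])
  ultimately have "{x + y |x y. x \<in> C \<and> y \<in> V} = UNIV" by simp
  then have "u \<in> {x + y |x y. x \<in> C \<and> y \<in> V}" by (rule equalityD2[THEN subsetD]) simp
  then show ?thesis by blast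
qed

definition pv :: "'n \<Rightarrow> 'n" where "pv u = (SOME b. b \<in> V \<and> u - b \<in> C)"

lemma pv_ex: "pv u \<in> V \<and> u - pv u \<in> C"
proof -
  obtain a b where "a \<in> C" "b \<in> V" "u = a + b" using decomp by blast
  then have "\<exists>b. b \<in> V \<and> u - b \<in> C" by auto
  then show ?thesis unfolding pv_def by (rule someI_ex)
qed
lemma pv_V: "pv u \<in> V" using pv_ex by blast
lemma pv_C: "u - pv u \<in> C" using pv_ex by blast

lemma pv_uniq: assumes "b \<in> V" "u - b \<in> C" shows "pv u = b"
proof -
  have "pv u - b \<in> V" using pv_V assms(1) subspace_diff[OF subspace_V] by blast
  moreover have "pv u - b = (u - b) - (u - pv u)" by simp
  then have "pv u - b \<in> C" using pv_C assms(2) subspace_diff[OF subspace_C] by metis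
  ultimately show ?thesis using CintV by fastforce
qed

lemma pv_on_V: "b \<in> V \<Longrightarrow> pv b = b"
  by (rule pv_uniq) (auto intro: subspace_0[OF subspace_C])
lemma pv_on_C: "a \<in> C \<Longrightarrow> pv a = 0"
  by (rule pv_uniq) (auto intro: subspace_0[OF subspace_V])

lemma pv_linear: "linear pv"
proof (rule linearI)
  fix x y :: 'n and r :: real
  show "pv (x + y) = pv x + pv y"
    apply (rule pv_uniq)
    using pv_V[of x] pv_V[of y] subspace_add[OF subspace_V] apply blast
    using pv_C[of x] pv_C[of y] subspace_add[OF subspace_C, of "x - pv x" "y - pv y"]
    by (simp add: algebra_simps)
  show "pv (r *\<^sub>R x) = r *\<^sub>R pv x"
    apply (rule pv_uniq)
    using pv_V[of x] subspace_scale[OF subspace_V] apply blast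
    using pv_C[of x] subspace_scale[OF subspace_C, of "x - pv x" r]
    by (simp add: algebra_simps)
qed

lemma pv_bl: "bounded_linear pv" using pv_linear linear_conv_bounded_linear by blast

lemma pv_simps[simp]: "pv (a + b) = pv a + pv b" "pv (a - b) = pv a - pv b"
  "pv (r *\<^sub>R a) = r *\<^sub>R pv a" "pv 0 = 0" "pv (- a) = - pv a" "pv (pv a) = pv a"
  using linear_add[OF pv_linear] linear_diff[OF pv_linear] linear_scale[OF pv_linear]
    linear_0[OF pv_linear] linear_neg[OF pv_linear] pv_on_V[OF pv_V] by auto

lemma br_pv: "br a b = br (pv a) (pv b)"
proof -
  have "br a b = br ((a - pv a) + pv a) ((b - pv b) + pv b)" by simp
  also have "\<dots> = br (pv a) (pv b)"
    using brCl[OF pv_C[of a]] brCr[OF pv_C[of b]] by (simp only: br_simps) simp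
  finally show ?thesis .
qed

lemma g_split: "g u w = g (u - pv u) (w - pv w) + g (pv u) (pv w)"
proof -
  have "g u w = g ((u - pv u) + pv u) ((w - pv w) + pv w)" by simp
  also have "\<dots> = g (u - pv u) (w - pv w) + g (pv u) (pv w)"
    using CV'[OF pv_C[of u] pv_V[of w]] CV[OF pv_C[of w] pv_V[of u]]
    by (simp only: g_simps(1,2))
  finally show ?thesis .
qed

lemma ndV: "a \<in> V \<Longrightarrow> (\<And>w. w \<in> V \<Longrightarrow> g a w = 0) \<Longrightarrow> a = 0"
proof (rule nd, rule allI)
  fix w assume a: "a \<in> V" and h: "\<And>w. w \<in> V \<Longrightarrow> g a w = 0"
  have "g a w = g (a - pv a) (w - pv w) + g (pv a) (pv w)" by (rule g_split)
  also have "\<dots> = 0" using pv_on_V[OF a] h[OF pv_V] by simp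
  finally show "g a w = 0" .
qed


lemma j_g: "z \<in> C \<Longrightarrow> x \<in> V \<Longrightarrow> y \<in> V \<Longrightarrow> g (j z x) y = g (br x y) z"
  using j2[of z x y] sym[of "j z x" y] by simp

lemma j_add: assumes z: "z \<in> C" and x: "x \<in> V" and y: "y \<in> V"
  shows "j z (x + y) = j z x + j z y"
proof -
  have xy: "x + y \<in> V" using x y subspace_add[OF subspace_V] by blast
  have "j z (x + y) - (j z x + j z y) = 0"
  proof (rule ndV)
    show "j z (x + y) - (j z x + j z y) \<in> V"
      using j1[OF z xy] j1[OF z x] j1[OF z y] subspace_add[OF subspace_V] subspace_diff[OF subspace_V]
      by blast
    fix w assume w: "w \<in> V"
    show "g (j z (x + y) - (j z x + j z y)) w = 0"
      using j_g[OF z xy w] j_g[OF z x w] j_g[OF z y w] by simp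
  qed
  then show ?thesis by simp
qed

lemma j_scale: assumes z: "z \<in> C" and x: "x \<in> V"
  shows "j z (r *\<^sub>R x) = r *\<^sub>R j z x"
proof -
  have rx: "r *\<^sub>R x \<in> V" using x subspace_scale[OF subspace_V] by blast
  have "j z (r *\<^sub>R x) - r *\<^sub>R j z x = 0"
  proof (rule ndV)
    show "j z (r *\<^sub>R x) - r *\<^sub>R j z x \<in> V"
      using j1[OF z rx] j1[OF z x] subspace_scale[OF subspace_V] subspace_diff[OF subspace_V]
      by blast
    fix w assume w: "w \<in> V"
    show "g (j z (r *\<^sub>R x) - r *\<^sub>R j z x) w = 0"
      using j_g[OF z rx w] j_g[OF z x w] by simp
  qed
  then show ?thesis by simp
qed

lemma j_zero: "z \<in> C \<Longrightarrow> j z 0 = 0"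
  using j_scale[of z 0 0] subspace_0[OF subspace_V] by simp

lemma j_zadd: assumes z: "z \<in> C" and z': "z' \<in> C" and x: "x \<in> V"
  shows "j (z + z') x = j z x + j z' x"
proof -
  have zz: "z + z' \<in> C" using z z' subspace_add[OF subspace_C] by blast
  have "j (z + z') x - (j z x + j z' x) = 0"
  proof (rule ndV)
    show "j (z + z') x - (j z x + j z' x) \<in> V"
      using j1[OF zz x] j1[OF z x] j1[OF z' x] subspace_add[OF subspace_V] subspace_diff[OF subspace_V]
      by blast
    fix w assume w: "w \<in> V"
    show "g (j (z + z') x - (j z x + j z' x)) w = 0"
      using j_g[OF zz x w] j_g[OF z x w] j_g[OF z' x w] by simp
  qed
  then show ?thesis by simp
qed

lemma j_skew: assumes z: "z \<in> C" and a: "a \<in> V" and b: "b \<in> V"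
  shows "g (j z a) b = - g a (j z b)"
proof -
  have "g (j z a) b = g (br a b) z" by (rule j_g[OF z a b])
  also have "\<dots> = - g (br b a) z" using skew[of a b] by simp
  also have "\<dots> = - g a (j z b)" using j2[OF z b a] by simp
  finally show ?thesis .
qed

lemma j_self: assumes z: "z \<in> C" and a: "a \<in> V" shows "g a (j z a) = 0"
  using j_skew[OF z a a] sym[of a "j z a"] by simp

lemma j_anti: assumes z: "z \<in> C" and w: "w \<in> C" and a: "a \<in> V"
  shows "j z (j w a) + j w (j z a) = - (2 * B z w) *\<^sub>R a"
proof -
  have zw: "z + w \<in> C" using z w subspace_add[OF subspace_C] by blast
  have ja: "j z a \<in> V" "j w a \<in> V" using j1 z w a by auto
  have "j (z + w) (j (z + w) a) = - (\<phi> (z + w)) *\<^sub>R a" by (rule j3[OF zw a])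
  moreover have "j (z + w) (j (z + w) a) = j z (j z a) + j z (j w a) + j w (j z a) + j w (j w a)"
  proof -
    have s: "j z a + j w a \<in> V" using ja subspace_add[OF subspace_V] by blast
    have "j (z + w) (j (z + w) a) = j (z + w) (j z a + j w a)" using j_zadd[OF z w a] by simp
    also have "\<dots> = j z (j z a + j w a) + j w (j z a + j w a)" by (rule j_zadd[OF z w s])
    also have "\<dots> = j z (j z a) + j z (j w a) + j w (j z a) + j w (j w a)"
      using j_add[OF z ja] j_add[OF w ja] by simp
    finally show ?thesis .
  qed
  moreover have "\<phi> (z + w) = B z z + 2 * B z w + B w w"
    using phiB[OF zw] symB[of w z] by simp
  ultimately have "j z (j z a) + j z (j w a) + j w (j z a) + j w (j w a)
      = - (B z z + 2 * B z w + B w w) *\<^sub>R a" by simp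
  moreover have "j z (j z a) = - (B z z) *\<^sub>R a" using j3[OF z a] phiB[OF z] by simp
  moreover have "j w (j w a) = - (B w w) *\<^sub>R a" using j3[OF w a] phiB[OF w] by simp
  ultimately have h: "j z (j w a) + j w (j z a) + (2 * B z w) *\<^sub>R a = 0" by (simp add: algebra_simps)
  then show ?thesis by (simp add: add_eq_0_iff2)
qed

definition Jl :: "'n \<Rightarrow> 'n \<Rightarrow> 'n" where "Jl z u = j z (pv u)"

lemma Jl_V: "z \<in> C \<Longrightarrow> Jl z u \<in> V" unfolding Jl_def using j1 pv_V by blast

lemma Jl_linear: assumes z: "z \<in> C" shows "linear (Jl z)"
proof (rule linearI)
  fix x y :: 'n and r :: real
  show "Jl z (x + y) = Jl z x + Jl z y" unfolding Jl_def using j_add[OF z pv_V pv_V] by simp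
  show "Jl z (r *\<^sub>R x) = r *\<^sub>R Jl z x" unfolding Jl_def using j_scale[OF z pv_V] by simp
qed

lemma Jl_bl: "z \<in> C \<Longrightarrow> bounded_linear (Jl z)" using Jl_linear linear_conv_bounded_linear by blast

lemma Jl_on_V: "a \<in> V \<Longrightarrow> Jl z a = j z a" unfolding Jl_def using pv_on_V by simp


definition kz :: "'n \<Rightarrow> 'n \<Rightarrow> 'n \<Rightarrow> real" where
  "kz X Y W = (g (br X Y) W - g (br Y W) X + g (br W X) Y) / 2"

lemma kz_linear: "linear (kz X Y)"
  by (rule linearI) (auto simp: kz_def field_simps)

lemma g_uniq: "(\<And>W. g u W = g u' W) \<Longrightarrow> u = u'"
proof -
  assume h: "\<And>W. g u W = g u' W"
  have "u - u' = 0" by (rule nd) (simp add: h)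
  then show ?thesis by simp
qed

lemma lc_char: "g (lc g br X Y) W = kz X Y W"
proof -
  obtain u where u: "\<forall>W. g u W = kz X Y W" using represent[OF kz_linear] by blast
  have "lc g br X Y = u" unfolding lc_def kz_def[symmetric]
  proof (rule the_equality)
    show "\<forall>W. g u W = kz X Y W" by (rule u)
    fix u' assume "\<forall>W. g u' W = kz X Y W"
    then show "u' = u" using u by (intro g_uniq) simp
  qed
  then show ?thesis using u by simp
qed

lemma lc_eq: "(\<And>W. g u W = kz X Y W) \<Longrightarrow> lc g br X Y = u"
  by (rule g_uniq) (simp add: lc_char)

lemma lc_add: "lc g br X (a + b) = lc g br X a + lc g br X b"
  by (rule lc_eq) (auto simp: lc_char kz_def field_simps)

lemma lc_scale: "lc g br X (r *\<^sub>R a) = r *\<^sub>R lc g br X a"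
  by (rule lc_eq) (simp add: lc_char kz_def algebra_simps)

lemma lc_linear: "linear (lc g br X)"
  by (rule linearI) (simp_all add: lc_add lc_scale)

lemma curv_add: "curv g br X Y (a + b) = curv g br X Y a + curv g br X Y b"
  unfolding curv_def by (simp add: lc_add linear_add[OF lc_linear])

lemma curv_scale: "curv g br X Y (r *\<^sub>R a) = r *\<^sub>R curv g br X Y a"
  unfolding curv_def by (simp add: lc_scale linear_scale[OF lc_linear] algebra_simps)

lemma ricci_linear: "linear (ricci g br Y)"
proof (rule linearI)
  fix a b :: 'n and r :: real
  show "ricci g br Y (a + b) = ricci g br Y a + ricci g br Y b"
    unfolding ricci_def by (simp add: curv_add inner_add_left sum.distrib)
  show "ricci g br Y (r *\<^sub>R a) = r *\<^sub>R ricci g br Y a"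
    unfolding ricci_def by (simp add: curv_scale sum_distrib_left)
qed

lemma ricci_op_char: "g (ricci_op g br Y) W = ricci g br Y W"
proof -
  obtain u where u: "\<forall>W. g u W = ricci g br Y W" using represent[OF ricci_linear] by blast
  have "ricci_op g br Y = u" unfolding ricci_op_def
  proof (rule the_equality)
    show "\<forall>W. g u W = ricci g br Y W" by (rule u)
    fix u' assume "\<forall>W. g u' W = ricci g br Y W"
    then show "u' = u" using u by (intro g_uniq) simp
  qed
  then show ?thesis using u by simp
qed


lemma gV: "a \<in> V \<Longrightarrow> g a W = g a (pv W)"
  using g_split[of a W] pv_on_V[of a] by simp

lemma lc_CC: "z \<in> C \<Longrightarrow> w \<in> C \<Longrightarrow> lc g br z w = 0"
  by (rule lc_eq) (simp add: kz_def brCl brCr)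

lemma lc_0l: "lc g br 0 w = 0"
  by (rule lc_eq) (simp add: kz_def)

lemma lc_0r: "lc g br X 0 = 0"
  using lc_scale[of X 0 0] by simp

lemma lc_bw: assumes w: "w \<in> C" shows "lc g br b w = -(1/2) *\<^sub>R Jl w b"
proof (rule lc_eq)
  fix W
  have "g (br W b) w = g (br (pv W) (pv b)) w" using br_pv[of W b] by simp
  also have "\<dots> = g (pv b) (j w (pv W))" by (rule j2[OF w pv_V pv_V])
  also have "\<dots> = g (j w (pv W)) (pv b)" by (rule sym)
  also have "\<dots> = - g (pv W) (Jl w b)" unfolding Jl_def by (rule j_skew[OF w pv_V pv_V])
  also have "\<dots> = - g (Jl w b) (pv W)" using sym[of "pv W"] by simp
  also have "\<dots> = - g (Jl w b) W" using gV[OF Jl_V[OF w]] by simp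
  finally have "g (br W b) w = - g (Jl w b) W" .
  then show "g (-(1/2) *\<^sub>R Jl w b) W = kz b w W"
    by (simp add: kz_def brCl[OF w] brCr[OF w])
qed

lemma lc_zu: assumes z: "z \<in> C" and u: "u \<in> V" shows "lc g br z u = -(1/2) *\<^sub>R Jl z u"
proof (rule lc_eq)
  fix W
  have "g (br u W) z = g (br (pv u) (pv W)) z" using br_pv[of u W] by simp
  also have "\<dots> = g (pv W) (j z (pv u))" by (rule j2[OF z pv_V pv_V])
  also have "\<dots> = g (Jl z u) (pv W)" unfolding Jl_def using sym[of "pv W"] by simp
  also have "\<dots> = g (Jl z u) W" using gV[OF Jl_V[OF z]] by simp
  finally have "g (br u W) z = g (Jl z u) W" .
  then show "g (-(1/2) *\<^sub>R Jl z u) W = kz z u W"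
    by (simp add: kz_def brCl[OF z] brCr[OF z])
qed

lemma curv_formula: assumes z: "z \<in> C" and w: "w \<in> C"
  shows "curv g br b z w = -(1/4) *\<^sub>R Jl z (Jl w b)"
proof -
  have "curv g br b z w = lc g br b (lc g br z w) - lc g br z (lc g br b w) - lc g br (br b z) w"
    by (simp add: curv_def)
  also have "\<dots> = - lc g br z (-(1/2) *\<^sub>R Jl w b)"
    using lc_CC[OF z w] lc_0r brCr[OF z] lc_0l lc_bw[OF w] linear_0[OF Jl_linear[OF w]] by simp
  also have "\<dots> = -(1/4) *\<^sub>R Jl z (Jl w b)"
    using lc_scale lc_zu[OF z Jl_V[OF w]] linear_neg[OF lc_linear] by simp
  finally show ?thesis .
qed

definition tr :: "('n \<Rightarrow> 'n) \<Rightarrow> real" where "tr F = (\<Sum>b\<in>Basis. F b \<bullet> b)"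

lemma lin_expand: assumes "linear A" shows "A x = (\<Sum>c\<in>Basis. (x \<bullet> c) *\<^sub>R A c)"
proof -
  have "A x = A (\<Sum>c\<in>Basis. (x \<bullet> c) *\<^sub>R c)" by (simp add: euclidean_representation)
  also have "\<dots> = (\<Sum>c\<in>Basis. A ((x \<bullet> c) *\<^sub>R c))" by (rule linear_sum[OF assms])
  also have "\<dots> = (\<Sum>c\<in>Basis. (x \<bullet> c) *\<^sub>R A c)" by (simp add: linear_scale[OF assms])
  finally show ?thesis .
qed

lemma tr_expand: assumes "linear P1"
  shows "tr (\<lambda>u. P1 (P2 u)) = (\<Sum>b\<in>Basis. \<Sum>c\<in>Basis. (P2 b \<bullet> c) * (P1 c \<bullet> b))"
  unfolding tr_def
  by (subst lin_expand[OF assms]) (simp add: inner_sum_left)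

lemma tr_comm: assumes "linear P1" "linear P2"
  shows "tr (\<lambda>u. P1 (P2 u)) = tr (\<lambda>u. P2 (P1 u))"
proof -
  have "tr (\<lambda>u. P2 (P1 u)) = (\<Sum>b\<in>Basis. \<Sum>c\<in>Basis. (P1 b \<bullet> c) * (P2 c \<bullet> b))"
    by (rule tr_expand[OF assms(2)])
  also have "\<dots> = (\<Sum>c\<in>Basis. \<Sum>b\<in>Basis. (P1 b \<bullet> c) * (P2 c \<bullet> b))" by (rule sum.swap)
  also have "\<dots> = tr (\<lambda>u. P1 (P2 u))" unfolding tr_expand[OF assms(1)]
    by (simp add: mult.commute)
  finally show ?thesis by simp
qed

definition Q :: "'n \<Rightarrow> 'n" where "Q x = (SOME y. y \<in> V \<and> (\<forall>w\<in>V. (x - y) \<bullet> w = 0))"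

lemma Q_ex: "Q x \<in> V \<and> (\<forall>w\<in>V. (x - Q x) \<bullet> w = 0)"
proof -
  obtain y z where yz: "y \<in> span V" "\<And>w. w \<in> span V \<Longrightarrow> orthogonal z w" "x = y + z"
    using orthogonal_subspace_decomp_exists[of V x] by blast
  have sV: "span V = V" by (rule span_eq_iff[THEN iffD2, OF subspace_V])
  have "y \<in> V \<and> (\<forall>w\<in>V. (x - y) \<bullet> w = 0)"
    using yz sV by (auto simp: orthogonal_def)
  then show ?thesis unfolding Q_def by (rule someI)
qed

lemma Q_uniq: assumes y: "y \<in> V" and ort: "\<And>w. w \<in> V \<Longrightarrow> (x - y) \<bullet> w = 0" shows "Q x = y"
proof -
  have dV: "Q x - y \<in> V" using Q_ex y subspace_diff[OF subspace_V] by blast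
  have "(Q x - y) \<bullet> w = 0" if "w \<in> V" for w
  proof -
    have "(Q x - y) \<bullet> w = (x - y) \<bullet> w - (x - Q x) \<bullet> w" by (simp add: inner_diff_left)
    then show ?thesis using ort[OF that] Q_ex that by simp
  qed
  from this[OF dV] show ?thesis by simp
qed

lemma Q_linear: "linear Q"
proof (rule linearI)
  fix x y :: 'n and r :: real
  show "Q (x + y) = Q x + Q y"
  proof (rule Q_uniq)
    show "Q x + Q y \<in> V" using Q_ex subspace_add[OF subspace_V] by blast
    fix w assume "w \<in> V"
    then show "(x + y - (Q x + Q y)) \<bullet> w = 0" using Q_ex[of x] Q_ex[of y]
      by (simp add: algebra_simps inner_diff_left inner_add_left)
  qed
  show "Q (r *\<^sub>R x) = r *\<^sub>R Q x"
  proof (rule Q_uniq)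
    show "r *\<^sub>R Q x \<in> V" using Q_ex subspace_scale[OF subspace_V] by blast
    fix w assume "w \<in> V"
    then show "(r *\<^sub>R x - r *\<^sub>R Q x) \<bullet> w = 0" using Q_ex[of x]
      by (simp add: inner_diff_left)
  qed
qed

lemma Q_on_V: "a \<in> V \<Longrightarrow> Q a = a"
  by (rule Q_uniq) auto

lemma V_nonzero: "\<exists>a\<in>V. a \<noteq> 0"
proof -
  obtain a b where "br a b \<noteq> 0" using nz by blast
  then have "br (pv a) (pv b) \<noteq> 0" using br_pv by simp
  then have "pv a \<noteq> 0" by auto
  then show ?thesis using pv_V by blast
qed

lemma tr_pv_pos: "tr pv > 0"
proof -
  have "tr pv = tr (\<lambda>u. Q (pv u))" unfolding tr_def using Q_on_V[OF pv_V] by simp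
  also have "\<dots> = tr (\<lambda>u. pv (Q u))" by (rule tr_comm[OF Q_linear pv_linear])
  also have "\<dots> = tr Q" unfolding tr_def using pv_on_V[OF conjunct1[OF Q_ex]] by simp
  finally have e: "tr pv = tr Q" .
  have qb: "Q b \<bullet> b = Q b \<bullet> Q b" for b
  proof -
    have "(b - Q b) \<bullet> Q b = 0" using Q_ex[of b] by blast
    then have "b \<bullet> Q b = Q b \<bullet> Q b" by (simp add: inner_diff_left)
    then show ?thesis by (simp add: inner_commute[of "Q b" b])
  qed
  have "tr Q > 0"
  proof (rule ccontr)
    assume "\<not> tr Q > 0"
    moreover have "tr Q = (\<Sum>b\<in>Basis. Q b \<bullet> Q b)" unfolding tr_def using qb by simp
    moreover have "\<And>b. Q b \<bullet> Q b \<ge> 0" by simp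
    ultimately have "(\<Sum>b\<in>Basis. Q b \<bullet> Q b) = 0"
      by (metis (no_types, lifting) antisym not_less sum_nonneg)
    then have "\<forall>b\<in>Basis. Q b \<bullet> Q b = 0" by (simp add: sum_nonneg_eq_0_iff)
    then have z: "\<forall>b\<in>Basis. Q b = 0" by simp
    obtain a where a: "a \<in> V" "a \<noteq> 0" using V_nonzero by blast
    have "Q a = (\<Sum>c\<in>Basis. (a \<bullet> c) *\<^sub>R Q c)" by (rule lin_expand[OF Q_linear])
    also have "\<dots> = 0" using z by simp
    finally show False using Q_on_V[OF a(1)] a(2) by simp
  qed
  with e show ?thesis by simp
qed

lemma ricci_CC: assumes z: "z \<in> C" and w: "w \<in> C"
  shows "ricci g br z w = (B z w / 4) * tr pv"
proof -
  have lz: "linear (Jl z)" and lw: "linear (Jl w)" using Jl_linear z w by auto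
  have "ricci g br z w = (\<Sum>b\<in>Basis. -(1/4) * (Jl z (Jl w b) \<bullet> b))"
    unfolding ricci_def using curv_formula[OF z w] by simp
  also have "\<dots> = -(1/4) * tr (\<lambda>u. Jl z (Jl w u))" unfolding tr_def by (simp add: sum_distrib_left)
  finally have r: "ricci g br z w = -(1/4) * tr (\<lambda>u. Jl z (Jl w u))" .
  have c: "tr (\<lambda>u. Jl z (Jl w u)) = tr (\<lambda>u. Jl w (Jl z u))" by (rule tr_comm[OF lz lw])
  have an: "Jl z (Jl w u) + Jl w (Jl z u) = -(2 * B z w) *\<^sub>R pv u" for u
    unfolding Jl_def using pv_on_V[OF j1[OF w pv_V]] pv_on_V[OF j1[OF z pv_V]] j_anti[OF z w pv_V]
    by simp
  have "tr (\<lambda>u. Jl z (Jl w u)) + tr (\<lambda>u. Jl w (Jl z u)) = tr (\<lambda>u. -(2 * B z w) *\<^sub>R pv u)"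
    unfolding tr_def by (simp add: sum.distrib[symmetric] inner_add_left[symmetric] an)
  also have "\<dots> = -(2 * B z w) * tr pv" unfolding tr_def by (simp add: sum_distrib_left)
  finally show ?thesis using r c by simp
qed

lemma Rc_B: assumes z: "z \<in> C" and w: "w \<in> C" and r: "ricci_op g br z = 0"
  shows "B z w = 0"
proof -
  have "ricci g br z w = 0" using ricci_op_char[of z w] r by simp
  then show ?thesis using ricci_CC[OF z w] tr_pv_pos by simp
qed

end


context mh begin

lemma gbb: "bounded_bilinear g" using bilinear_conv_bounded_bilinear[THEN iffD1, OF bil_g] .

lemma g_deriv:
  assumes "(f has_vector_derivative f') (at t within S)" "(h has_vector_derivative h') (at t within S)"
  shows "((\<lambda>s. g (f s) (h s)) has_real_derivative (g (f t) h' + g f' (h t))) (at t within S)"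
  using bounded_bilinear.has_vector_derivative[OF gbb assms]
  by (simp add: has_real_derivative_iff_has_vector_derivative)

lemma lin_deriv: fixes L :: "'n \<Rightarrow> 'b::real_normed_vector" and f :: "real \<Rightarrow> 'n"
  assumes "linear L" "(f has_vector_derivative f') F"
  shows "((\<lambda>s. L (f s)) has_vector_derivative L f') F"
  using bounded_linear.has_vector_derivative[OF linear_conv_bounded_linear[THEN iffD1, OF assms(1)] assms(2)] .

lemma JK: assumes z: "z \<in> C" and w: "w \<in> C" and a: "a \<in> V"
  shows "g (j z a) (j w a) = B z w * g a a"
proof -
  have 1: "g (j z a) (j w a) = - g a (j z (j w a))" by (rule j_skew[OF z a j1[OF w a]])
  have 2: "g (j z a) (j w a) = - g a (j w (j z a))"
    using j_skew[OF w a j1[OF z a]] sym[of "j z a" "j w a"] by simp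
  have "g a (j z (j w a) + j w (j z a)) = - (2 * B z w) * g a a" using j_anti[OF z w a] by simp
  then show ?thesis using 1 2 by simp
qed

lemma main:
  fixes I :: "real set" and \<gamma> z x :: "real \<Rightarrow> 'n" and z0 x0 :: 'n
  assumes Iint: "is_interval I" and I0: "0 \<in> I"
    and zx: "\<forall>t\<in>I. z t \<in> C \<and> x t \<in> V \<and> \<gamma> t = z t + x t"
    and geo: "is_geodesic g br I \<gamma>"
    and g0: "\<gamma> 0 = 0"
    and d0: "(\<gamma> has_vector_derivative (z0 + x0)) (at 0 within I)"
    and z0: "z0 \<in> C" and x0: "x0 \<in> V"
    and hyp: "\<forall>w\<in>C. B z0 w * g x0 x0 = 0"
    and t: "t \<in> I"
  shows "z t = t *\<^sub>R z0"
proof -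
  have cvx: "convex I" by (rule is_interval_convex[OF Iint])
  have iv: "\<And>a b s. a \<in> I \<Longrightarrow> b \<in> I \<Longrightarrow> a \<le> s \<Longrightarrow> s \<le> b \<Longrightarrow> s \<in> I"
    using Iint unfolding is_interval_1 by blast
  have key: "g (\<gamma> t) w = t * g z0 w" if w: "w \<in> C" for w
  proof (cases "I \<subseteq> {0}")
    case True
    then have "t = 0" using t by auto
    then show ?thesis using g0 by simp
  next
    case False
    then obtain t1 where t1: "t1 \<in> I" "t1 \<noteq> 0" by auto
    have nb: "at 0 within I \<noteq> bot"
    proof -
      have "0 islimpt I"
      proof (cases "t1 > 0")
        case True
        have s: "{0..t1} \<subseteq> I" by (intro subsetI) (auto intro: iv[OF I0 t1(1)])
        have l: "0 islimpt {0..t1}" using True by simp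
        show ?thesis by (rule islimpt_subset[OF l s])
      next
        case False
        then have "t1 < 0" using t1(2) by simp
        have s: "{t1..0} \<subseteq> I" by (intro subsetI) (auto intro: iv[OF t1(1) I0])
        have l: "0 islimpt {t1..0}" using \<open>t1 < 0\<close> by simp
        show ?thesis by (rule islimpt_subset[OF l s])
      qed
      then show ?thesis using trivial_limit_within by blast
    qed
    obtain v where dv: "\<forall>s\<in>I. (\<gamma> has_vector_derivative v s) (at s within I)"
      and EL: "\<forall>s\<in>I. \<forall>w. \<exists>D.
        ((\<lambda>h. lmetric g br (\<gamma> s + h *\<^sub>R w) (v s) (v s)) has_real_derivative D) (at 0) \<and>
        ((\<lambda>r. lmetric g br (\<gamma> r) (v r) w) has_real_derivative D / 2) (at s within I)"
      using geo unfolding is_geodesic_def by blast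
    have dvs: "(\<gamma> has_vector_derivative v s) (at s within I)" if "s \<in> I" for s
      using dv that by blast
    have v0: "v 0 = z0 + x0"
      using vector_derivative_unique_within[OF nb dvs[OF I0] d0] .
    define U where "U s = v s - (1/2) *\<^sub>R br (\<gamma> s) (v s)" for s
    have ELd: "((\<lambda>r. lmetric g br (\<gamma> r) (v r) w') has_real_derivative
        (- (g (U s) (br w' (v s)) + g (br w' (v s)) (U s)) / 4)) (at s within I)"
      if s: "s \<in> I" for s w'
    proof -
      obtain D where D1: "((\<lambda>h. lmetric g br (\<gamma> s + h *\<^sub>R w') (v s) (v s)) has_real_derivative D) (at 0)"
        and D2: "((\<lambda>r. lmetric g br (\<gamma> r) (v r) w') has_real_derivative D / 2) (at s within I)"
        using EL s by blast
      define c where "c = (1/2) *\<^sub>R br w' (v s)"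
      have fe: "(\<lambda>h. lmetric g br (\<gamma> s + h *\<^sub>R w') (v s) (v s)) = (\<lambda>h. g (U s - h *\<^sub>R c) (U s - h *\<^sub>R c))"
        by (rule ext) (simp add: lmetric_def U_def c_def algebra_simps)
      have sc: "((\<lambda>h. h *\<^sub>R c) has_vector_derivative c) (at 0)"
        unfolding has_vector_derivative_def by (rule bounded_linear_imp_has_derivative[OF bounded_linear_scaleR_left])
      have vd: "((\<lambda>h. U s - h *\<^sub>R c) has_vector_derivative (0 - c)) (at 0)"
        by (rule has_vector_derivative_diff[OF has_vector_derivative_const sc])
      have "((\<lambda>h. lmetric g br (\<gamma> s + h *\<^sub>R w') (v s) (v s)) has_real_derivative
          (g (U s - 0 *\<^sub>R c) (0 - c) + g (0 - c) (U s - 0 *\<^sub>R c))) (at 0)"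
        unfolding fe by (rule g_deriv[OF vd vd])
      then have "D = g (U s - 0 *\<^sub>R c) (0 - c) + g (0 - c) (U s - 0 *\<^sub>R c)"
        using DERIV_unique D1 by blast
      then have dd: "D / 2 = (- (g (U s) (br w' (v s)) + g (br w' (v s)) (U s)) / 4)"
        by (simp add: c_def)
      show ?thesis using D2 unfolding dd .
    qed
    have UC: "g (U s) w' = g z0 w'" if s: "s \<in> I" and w': "w' \<in> C" for s w'
    proof -
      have fe: "(\<lambda>r. lmetric g br (\<gamma> r) (v r) w') = (\<lambda>r. g (U r) w')"
        by (rule ext) (simp add: lmetric_def U_def brCr[OF w'])
      have d: "((\<lambda>r. g (U r) w') has_real_derivative 0) (at r within I)" if "r \<in> I" for r
        using ELd[OF that, of w'] unfolding fe by (simp add: brCl[OF w'])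
      have "g (U s) w' = g (U 0) w'" by (rule const_on[OF cvx I0 s, of "\<lambda>r. g (U r) w'"]) (rule d)
      also have "\<dots> = g z0 w'" using v0 g0 CV[OF w' x0] by (simp add: U_def)
      finally show ?thesis .
    qed
    have VV: "g (v s) w' = g x0 w' + g z0 (br (\<gamma> s) w')" if s: "s \<in> I" and w': "w' \<in> V" for s w'
    proof -
      have fe: "lmetric g br (\<gamma> r) (v r) w' = g (v r) w' - (1/2) * g z0 (br (\<gamma> r) w')" if r: "r \<in> I" for r
      proof -
        have "lmetric g br (\<gamma> r) (v r) w' = g (U r) w' - (1/2) * g (U r) (br (\<gamma> r) w')"
          by (simp add: lmetric_def U_def)
        also have "g (U r) (br (\<gamma> r) w') = g z0 (br (\<gamma> r) w')" by (rule UC[OF r br_C])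
        also have "g (U r) w' = g (v r) w'"
          using CV'[OF br_C w'] by (simp add: U_def)
        finally show ?thesis .
      qed
      have lin1: "linear (\<lambda>u. g z0 (br u w'))" by (rule linearI) simp_all
      have d: "((\<lambda>r. g (v r) w' - g z0 (br (\<gamma> r) w')) has_real_derivative 0) (at r within I)"
        if r: "r \<in> I" for r
      proof -
        have d1: "((\<lambda>r. g (v r) w' - (1/2) * g z0 (br (\<gamma> r) w')) has_real_derivative
            (- (g (U r) (br w' (v r)) + g (br w' (v r)) (U r)) / 4)) (at r within I)"
          by (rule has_field_derivative_transform_within[OF ELd[OF r] zero_less_one r]) (simp add: fe)
        have e1: "g (U r) (br w' (v r)) = g z0 (br w' (v r))" by (rule UC[OF r br_C])
        have e2: "g (br w' (v r)) (U r) = g z0 (br w' (v r))" using e1 sym[of "br w' (v r)"] by simp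
        have d2: "((\<lambda>r. g z0 (br (\<gamma> r) w')) has_real_derivative g z0 (br (v r) w')) (at r within I)"
          using lin_deriv[OF lin1 dvs[OF r]] by (simp add: has_real_derivative_iff_has_vector_derivative)
        have dd: "((\<lambda>r. (g (v r) w' - (1/2) * g z0 (br (\<gamma> r) w')) - (1/2) * g z0 (br (\<gamma> r) w')) has_real_derivative
             (- (g (U r) (br w' (v r)) + g (br w' (v r)) (U r)) / 4) - (1/2) * g z0 (br (v r) w')) (at r within I)"
          by (rule DERIV_diff[OF d1 DERIV_cmult[OF d2]])
        have fe2: "(\<lambda>r. (g (v r) w' - (1/2) * g z0 (br (\<gamma> r) w')) - (1/2) * g z0 (br (\<gamma> r) w'))
          = (\<lambda>r. g (v r) w' - g z0 (br (\<gamma> r) w'))" by (rule ext) simp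
        have zz: "(- (g (U r) (br w' (v r)) + g (br w' (v r)) (U r)) / 4) - (1/2) * g z0 (br (v r) w') = 0"
          using e1 e2 skew[of w' "v r"] by simp
        show ?thesis using dd unfolding fe2 zz .
      qed
      have "g (v s) w' - g z0 (br (\<gamma> s) w') = g (v 0) w' - g z0 (br (\<gamma> 0) w')"
        by (rule const_on[OF cvx I0 s, of "\<lambda>r. g (v r) w' - g z0 (br (\<gamma> r) w')"]) (rule d)
      also have "\<dots> = g x0 w'" using v0 g0 CV'[OF z0 w'] by simp
      finally show ?thesis by simp
    qed
    define xs where "xs s = pv (\<gamma> s)" for s
    have xs_x: "x s = xs s" if s: "s \<in> I" for s
      unfolding xs_def using zx s by (intro pv_uniq[symmetric]) auto
    define J where "J = Jl z0"
    have lJ: "linear J" unfolding J_def by (rule Jl_linear[OF z0])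
    have pvv: "pv (v s) = x0 + J (xs s)" if s: "s \<in> I" for s
    proof -
      have "pv (v s) - (x0 + J (xs s)) = 0"
      proof (rule ndV)
        show "pv (v s) - (x0 + J (xs s)) \<in> V"
          using pv_V x0 Jl_V[OF z0] subspace_add[OF subspace_V] subspace_diff[OF subspace_V]
          unfolding J_def by blast
        fix w' assume w': "w' \<in> V"
        have a: "g (pv (v s)) w' = g (v s) w'"
          using g_split[of "v s" w'] pv_on_V[OF w'] by simp
        have "g z0 (br (\<gamma> s) w') = g (br (xs s) w') z0"
          using sym[of z0] br_pv[of "\<gamma> s" w'] pv_on_V[OF w'] unfolding xs_def by simp
        also have "\<dots> = g w' (j z0 (xs s))" by (rule j2[OF z0]) (auto simp: xs_def pv_V w')
        also have "\<dots> = g (J (xs s)) w'" unfolding J_def xs_def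
          using Jl_on_V[OF pv_V] sym[of w'] by simp
        finally have b: "g z0 (br (\<gamma> s) w') = g (J (xs s)) w'" .
        show "g (pv (v s) - (x0 + J (xs s))) w' = 0" using a b VV[OF s w'] by simp
      qed
      then show ?thesis by simp
    qed
    have dx: "(xs has_vector_derivative (x0 + J (xs s))) (at s within I)" if s: "s \<in> I" for s
      using lin_deriv[OF pv_linear dvs[OF s]] pvv[OF s] unfolding xs_def by simp
    define K where "K = Jl w"
    have lK: "linear K" unfolding K_def by (rule Jl_linear[OF w])
    define e where "e s = x0 + J (xs s)" for s
    have eV: "e s \<in> V" for s
      unfolding e_def J_def using x0 Jl_V[OF z0] subspace_add[OF subspace_V] by blast
    have de: "(e has_vector_derivative J (e s)) (at s within I)" if s: "s \<in> I" for s
    proof -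
      have "((\<lambda>r. x0 + J (xs r)) has_vector_derivative (0 + J (x0 + J (xs s)))) (at s within I)"
        by (rule has_vector_derivative_add[OF has_vector_derivative_const lin_deriv[OF lJ dx[OF s]]])
      then show ?thesis unfolding e_def by simp
    qed
    have dKx: "((\<lambda>r. K (xs r)) has_vector_derivative K (e s)) (at s within I)" if s: "s \<in> I" for s
      using lin_deriv[OF lK dx[OF s]] unfolding e_def by simp
    have dJe: "((\<lambda>r. J (e r)) has_vector_derivative J (J (e s))) (at s within I)" if s: "s \<in> I" for s
      by (rule lin_deriv[OF lJ de[OF s]])
    have Jon: "J a = j z0 a" if "a \<in> V" for a unfolding J_def using Jl_on_V[OF that] .
    have Kon: "K a = j w a" if "a \<in> V" for a unfolding K_def using Jl_on_V[OF that] .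
    have xsV: "xs s \<in> V" for s unfolding xs_def by (rule pv_V)
    have R: "g (e s) (e s) = g x0 x0" if s: "s \<in> I" for s
    proof -
      have d: "((\<lambda>r. g (e r) (e r)) has_real_derivative 0) (at r within I)" if r: "r \<in> I" for r
      proof -
        have "((\<lambda>r. g (e r) (e r)) has_real_derivative (g (e r) (J (e r)) + g (J (e r)) (e r))) (at r within I)"
          by (rule g_deriv[OF de[OF r] de[OF r]])
        moreover have "g (e r) (J (e r)) = 0" using j_self[OF z0 eV] Jon[OF eV] by simp
        moreover have "g (J (e r)) (e r) = 0" using j_self[OF z0 eV] Jon[OF eV] sym[of "J (e r)"] by simp
        ultimately show ?thesis by simp
      qed
      have "g (e s) (e s) = g (e 0) (e 0)"
        by (rule const_on[OF cvx I0 s, of "\<lambda>r. g (e r) (e r)"]) (rule d)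
      also have "\<dots> = g x0 x0" unfolding e_def xs_def using g0 linear_0[OF lJ] by simp
      finally show ?thesis .
    qed
    define P where "P s = g (e s) (K (xs s))" for s
    define Qf where "Qf s = g (J (e s)) (K (xs s))" for s
    have dP: "(P has_real_derivative Qf s) (at s within I)" if s: "s \<in> I" for s
    proof -
      have "(P has_real_derivative (g (e s) (K (e s)) + g (J (e s)) (K (xs s)))) (at s within I)"
        unfolding P_def by (rule g_deriv[OF de[OF s] dKx[OF s]])
      moreover have "g (e s) (K (e s)) = 0" using j_self[OF w eV] Kon[OF eV] by simp
      ultimately show ?thesis unfolding Qf_def by simp
    qed
    have dQ: "(Qf has_real_derivative (- \<phi> z0 * P s)) (at s within I)" if s: "s \<in> I" for s
    proof -
      have "(Qf has_real_derivative (g (J (e s)) (K (e s)) + g (J (J (e s))) (K (xs s)))) (at s within I)"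
        unfolding Qf_def by (rule g_deriv[OF dJe[OF s] dKx[OF s]])
      moreover have "g (J (e s)) (K (e s)) = 0"
      proof -
        have "g (J (e s)) (K (e s)) = B z0 w * g (e s) (e s)"
          using JK[OF z0 w eV] Jon[OF eV] Kon[OF eV] by simp
        also have "\<dots> = B z0 w * g x0 x0" using R[OF s] by simp
        also have "\<dots> = 0" using hyp w by blast
        finally show ?thesis .
      qed
      moreover have "J (J (e s)) = - \<phi> z0 *\<^sub>R e s"
        using Jon[OF eV] Jon[OF j1[OF z0 eV]] j3[OF z0 eV] by simp
      ultimately show ?thesis unfolding P_def by simp
    qed
    have P0: "P 0 = 0" unfolding P_def xs_def using g0 linear_0[OF lK] by simp
    have Q0: "Qf 0 = 0" unfolding Qf_def xs_def using g0 linear_0[OF lK] by simp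
    have Pz: "P s = 0" if s: "s \<in> I" for s
      by (rule ode2[OF cvx I0 dP dQ P0 Q0 s])
    have vw: "g (v s) w = g z0 w" if s: "s \<in> I" for s
    proof -
      have "br (\<gamma> s) (v s) = br (xs s) (e s)"
        using br_pv[of "\<gamma> s" "v s"] pvv[OF s] unfolding xs_def e_def by simp
      then have "g (br (\<gamma> s) (v s)) w = g (e s) (j w (xs s))"
        using j2[OF w xsV eV] by simp
      also have "\<dots> = P s" unfolding P_def using Kon[OF xsV] by simp
      finally have "g (br (\<gamma> s) (v s)) w = 0" using Pz[OF s] by simp
      then show ?thesis using UC[OF s w] by (simp add: U_def)
    qed
    have lin2: "linear (\<lambda>u. g u w)" by (rule lin_gl)
    have dF: "((\<lambda>r. g (\<gamma> r) w - r * g z0 w) has_real_derivative 0) (at s within I)" if s: "s \<in> I" for s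
    proof -
      have d1: "((\<lambda>r. g (\<gamma> r) w) has_real_derivative g (v s) w) (at s within I)"
        using lin_deriv[OF lin2 dvs[OF s]] by (simp add: has_real_derivative_iff_has_vector_derivative)
      have "((\<lambda>r. g (\<gamma> r) w - r * g z0 w) has_real_derivative (g (v s) w - 1 * g z0 w)) (at s within I)"
        by (rule DERIV_diff[OF d1 DERIV_cmult_right[OF DERIV_ident]])
      then show ?thesis using vw[OF s] by simp
    qed
    have "g (\<gamma> t) w - t * g z0 w = g (\<gamma> 0) w - 0 * g z0 w"
      by (rule const_on[OF cvx I0 t, of "\<lambda>r. g (\<gamma> r) w - r * g z0 w"]) (rule dF)
    then show ?thesis using g0 by simp
  qed
  have zt: "z t \<in> C" "x t \<in> V" "\<gamma> t = z t + x t" using zx t by auto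
  have "z t - t *\<^sub>R z0 = 0"
  proof (rule ndz)
    show "z t - t *\<^sub>R z0 \<in> C" using zt z0 subspace_diff[OF subspace_C] subspace_scale[OF subspace_C] by blast
    show "\<forall>w\<in>C. g (z t - t *\<^sub>R z0) w = 0"
    proof
      fix w assume w: "w \<in> C"
      have "g (\<gamma> t) w = g (z t) w" using zt CV[OF w zt(2)] by simp
      then show "g (z t - t *\<^sub>R z0) w = 0" using key[OF w] by simp
    qed
  qed
  then show ?thesis by simp
qed

end

theorem corollary4p7:
  fixes g :: "'n::euclidean_space \<Rightarrow> 'n \<Rightarrow> real"
    and br :: "'n \<Rightarrow> 'n \<Rightarrow> 'n"
    and \<phi> :: "'n \<Rightarrow> real"
    and I :: "real set"
    and \<gamma> z x :: "real \<Rightarrow> 'n"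
    and z0 x0 :: 'n
  assumes "modified_H_type g br \<phi>"
    and "is_interval I" and "0 \<in> I"
    and "\<forall>t\<in>I. z t \<in> center br \<and> x t \<in> perp_center g br \<and> \<gamma> t = z t + x t"
    and "is_geodesic g br I \<gamma>"
    and "\<gamma> 0 = 0"
    and "(\<gamma> has_vector_derivative (z0 + x0)) (at 0 within I)"
    and "z0 \<in> center br" and "x0 \<in> perp_center g br"
    and "z0 \<noteq> 0" and "x0 \<noteq> 0"
    and "g x0 x0 = 0 \<or> ricci_op g br z0 = 0"
  shows "\<forall>t\<in>I. z t = t *\<^sub>R z0"
proof -
  note H = assms(1)[unfolded modified_H_type_def]
  have tsn: "two_step_nilpotent br" by (rule conjunct1[OF H])
  have pm: "pr_metric g" by (rule conjunct1[OF conjunct2[OF H]])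
  have ndz: "\<forall>u\<in>center br. (\<forall>v\<in>center br. g u v = 0) \<longrightarrow> u = 0"
    by (rule conjunct1[OF conjunct2[OF conjunct2[OF H]]])
  have exB: "\<exists>B. bilinear B \<and> (\<forall>u v. B u v = B v u) \<and> (\<forall>z\<in>center br. \<phi> z = B z z)"
    by (rule conjunct1[OF conjunct2[OF conjunct2[OF conjunct2[OF H]]]])
  have exj: "\<exists>j. (\<forall>z\<in>center br. \<forall>x\<in>perp_center g br. j z x \<in> perp_center g br) \<and>
          (\<forall>z\<in>center br. \<forall>x\<in>perp_center g br. \<forall>y\<in>perp_center g br.
               g (br x y) z = g y (j z x)) \<and>
          (\<forall>z\<in>center br. \<forall>x\<in>perp_center g br. j z (j z x) = - (\<phi> z) *\<^sub>R x)"
    by (rule conjunct2[OF conjunct2[OF conjunct2[OF conjunct2[OF H]]]])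
  obtain B where Bc: "bilinear B \<and> (\<forall>u v. B u v = B v u) \<and> (\<forall>z\<in>center br. \<phi> z = B z z)"
    using exB by (rule exE)
  note B = conjunct1[OF Bc] conjunct1[OF conjunct2[OF Bc]] conjunct2[OF conjunct2[OF Bc]]
  obtain j where jc: "(\<forall>z\<in>center br. \<forall>x\<in>perp_center g br. j z x \<in> perp_center g br) \<and>
          (\<forall>z\<in>center br. \<forall>x\<in>perp_center g br. \<forall>y\<in>perp_center g br.
               g (br x y) z = g y (j z x)) \<and>
          (\<forall>z\<in>center br. \<forall>x\<in>perp_center g br. j z (j z x) = - (\<phi> z) *\<^sub>R x)"
    using exj by (rule exE)
  note j = conjunct1[OF jc] conjunct1[OF conjunct2[OF jc]] conjunct2[OF conjunct2[OF jc]]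
  have t1c: "bilinear br \<and> (\<forall>a b. br a b = - br b a) \<and> (\<forall>a b c. br (br a b) c = 0) \<and> (\<exists>a b. br a b \<noteq> 0)"
    using tsn unfolding two_step_nilpotent_def .
  note t1 = conjunct1[OF t1c] conjunct1[OF conjunct2[OF t1c]] conjunct1[OF conjunct2[OF conjunct2[OF t1c]]]
    conjunct2[OF conjunct2[OF conjunct2[OF t1c]]]
  have p1c: "bilinear g \<and> (\<forall>u v. g u v = g v u) \<and> (\<forall>u. (\<forall>v. g u v = 0) \<longrightarrow> u = 0)"
    using pm unfolding pr_metric_def .
  note p1 = conjunct1[OF p1c] conjunct1[OF conjunct2[OF p1c]] conjunct2[OF conjunct2[OF p1c]]
  interpret mh g br \<phi> B j
  proof
    show "bilinear br" by (rule t1(1))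
    show "\<And>a b. br a b = - br b a" by (rule t1(2)[rule_format])
    show "\<And>a b c. br (br a b) c = 0" by (rule t1(3)[rule_format])
    show "\<exists>a b. br a b \<noteq> 0" by (rule t1(4))
    show "bilinear g" by (rule p1(1))
    show "\<And>u v. g u v = g v u" by (rule p1(2)[rule_format])
    show "\<And>u. \<forall>v. g u v = 0 \<Longrightarrow> u = 0" using p1(3) by blast
    show "\<And>u. u \<in> center br \<Longrightarrow> \<forall>v\<in>center br. g u v = 0 \<Longrightarrow> u = 0" using ndz by blast
    show "bilinear B" by (rule B(1))
    show "\<And>u v. B u v = B v u" by (rule B(2)[rule_format])
    show "\<And>z. z \<in> center br \<Longrightarrow> \<phi> z = B z z" by (rule B(3)[rule_format])
    show "\<And>z x. z \<in> center br \<Longrightarrow> x \<in> perp_center g br \<Longrightarrow> j z x \<in> perp_center g br"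
      by (rule j(1)[rule_format])
    show "\<And>z x y. z \<in> center br \<Longrightarrow> x \<in> perp_center g br \<Longrightarrow> y \<in> perp_center g br \<Longrightarrow>
               g (br x y) z = g y (j z x)" by (rule j(2)[rule_format])
    show "\<And>z x. z \<in> center br \<Longrightarrow> x \<in> perp_center g br \<Longrightarrow> j z (j z x) = - (\<phi> z) *\<^sub>R x"
      by (rule j(3)[rule_format])
  qed
  have hyp: "\<forall>w\<in>center br. B z0 w * g x0 x0 = 0"
  proof
    fix w assume w: "w \<in> center br"
    show "B z0 w * g x0 x0 = 0"
    proof (cases "g x0 x0 = 0")
      case True then show ?thesis by simp
    next
      case False
      then have "ricci_op g br z0 = 0" using assms(12) by simp
      then have "B z0 w = 0" by (rule Rc_B[OF assms(8) w])
      then show ?thesis by simp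
    qed
  qed
  show ?thesis
  proof
    fix t assume t: "t \<in> I"
    show "z t = t *\<^sub>R z0"
      by (rule main[OF assms(2,3,4,5,6,7,8,9) hyp t])
  qed
qed

end
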